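(* Let $t=(k_1,\dots,k_l)$ be a parameter tuple of length $l\in\mathbb{N}$, let $m\in\mathbb{N}_0$ and $s\in\mathbb{R}$ with $s>1$. Then $$\mathrm{vdW}_{m+l}(\underbrace{2,\dots,2}_{m},k_1,\dots,k_l)\le\max\big(s\cdot m+1,\ \mathrm{cr}_{\mathrm{ap}}(t,1-\tfrac1s)\big).$$
   Context: A parameter tuple is a non-decreasing tuple $(k_1,\dots,k_r)$ of integers $k_i\ge2$. An arithmetic progression of size $k$ in $\mathbb{N}$ is a $k$-element set $P\subset\mathbb{N}$ such that, in natural order, consecutive elements always have the same distance (for $k>1$: sets $\{a+id: i=0,\dots,k-1\}$ with $a,d\in\mathbb{N}$). For a parameter tuple $(k_1,\dots,k_r)$, the van der Waerden number $\mathrm{vdW}_r(k_1,\dots,k_r)$ is the smallest $n_0\in\mathbb{N}$ such that for every $n\ge n_0$ and every $f:\{1,\dots,n\}\to\{1,\dots,r\}$ there is $i$ such that $f^{-1}(i)$ contains an arithmetic progression of size $k_i$. Let $\mathrm{ap}(k,n)$ be the hypergraph with vertex set $\{1,\dots,n\}$ whose hyperedges are the arithmetic progressions of size $k$ in $\{1,\dots,n\}$. For $q>0$, $\mathrm{cr}_{\mathrm{ap}}(t,q)\in\mathbb{N}\cup\{+\infty\}$ is the infimum of all $n\in\mathbb{N}$ such that for all $n'\ge n$ and all pairwise disjoint $S_1,\dots,S_l\subseteq\{1,\dots,n'\}$ with $S_i$ containing no arithmetic progression of size $k_i$, we have $\frac{|S_1|+\dots+|S_l|}{n'}<q$ (infimum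 of the empty set is $+\infty$). *)

theory Defs
  imports Complex_Main "HOL-Library.Extended_Real"
begin

definition param_tuple :: "nat list \<Rightarrow> bool" where
  "param_tuple ks \<longleftrightarrow> sorted ks \<and> (\<forall>k\<in>set ks. k \<ge> 2)"

definition is_ap :: "nat \<Rightarrow> nat set \<Rightarrow> bool" where
  "is_ap k P \<longleftrightarrow> card P = k \<and> (\<exists>a d. d \<ge> 1 \<and> P = {a + i * d | i. i < k})"

definition has_ap :: "nat \<Rightarrow> nat set \<Rightarrow> bool" where
  "has_ap k S \<longleftrightarrow> (\<exists>P. P \<subseteq> S \<and> is_ap k P)"

text \<open>Van der Waerden number for the parameter tuple ks (colour i, 1-based, gets ks!(i-1)).
  Infimum in enat; it is infinite iff no such n0 exists.\<close>
definition vdW :: "nat list \<Rightarrow> enat" where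
  "vdW ks = Inf (enat ` {n0. \<forall>n\<ge>n0. \<forall>f :: nat \<Rightarrow> nat. f ` {1..n} \<subseteq> {1..length ks} \<longrightarrow>
      (\<exists>i\<in>{1..length ks}. has_ap (ks ! (i - 1)) ({x\<in>{1..n}. f x = i}))})"

definition cr_ap :: "nat list \<Rightarrow> real \<Rightarrow> enat" where
  "cr_ap t q = Inf (enat ` {n. n \<ge> 1 \<and> (\<forall>n'\<ge>n. \<forall>S :: nat \<Rightarrow> nat set.
      ((\<forall>i<length t. S i \<subseteq> {1..n'} \<and> \<not> has_ap (t ! i) (S i)) \<and>
       (\<forall>i<length t. \<forall>j<length t. i \<noteq> j \<longrightarrow> S i \<inter> S j = {}))
      \<longrightarrow> real (\<Sum>i<length t. card (S i)) / real n' < q)})"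

end

theory Submission
  imports Defs
begin

lemma has_ap2: assumes "a \<in> S" "b \<in> S" "a < b" shows "has_ap 2 S"
proof -
  have P: "{a + i * (b - a) | i. i < (2::nat)} = {a, b}"
  proof
    show "{a + i * (b - a) | i. i < (2::nat)} \<subseteq> {a, b}"
    proof
      fix x assume "x \<in> {a + i * (b - a) | i. i < (2::nat)}"
      then obtain i where "i < (2::nat)" "x = a + i * (b - a)" by blast
      then have "i = 0 \<or> i = 1" by auto
      then show "x \<in> {a, b}" using \<open>x = _\<close> assms(3) by auto
    qed
  next
    have "a \<in> {a + i * (b - a) | i. i < (2::nat)}"
      by (rule CollectI, rule exI[of _ "0::nat"]) simp
    moreover have "b \<in> {a + i * (b - a) | i. i < (2::nat)}"
      by (rule CollectI, rule exI[of _ "1::nat"]) (use assms(3) in simp)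
    ultimately show "{a, b} \<subseteq> {a + i * (b - a) | i. i < (2::nat)}" by simp
  qed
  have "card {a, b} = 2" using assms(3) by simp
  moreover have "\<exists>a' d. d \<ge> 1 \<and> {a, b} = {a' + i * d | i. i < (2::nat)}"
  proof (intro exI conjI)
    show "1 \<le> b - a" using assms(3) by simp
    show "{a, b} = {a + i * (b - a) | i. i < (2::nat)}" by (rule P[symmetric])
  qed
  ultimately have "is_ap 2 {a, b}" unfolding is_ap_def by (rule conjI)
  moreover have "{a, b} \<subseteq> S" using assms by simp
  ultimately show ?thesis unfolding has_ap_def by blast
qed

lemma no_ap2_card: assumes "finite S" "\<not> has_ap 2 S" shows "card S \<le> 1"
proof -
  have "\<forall>x\<in>S. \<forall>y\<in>S. x = y"
  proof (intro ballI)
    fix x y assume "x \<in> S" "y \<in> S"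
    show "x = y"
    proof (rule ccontr)
      assume "x \<noteq> y"
      then have "x < y \<or> y < x" by arith
      then show False using has_ap2[of x S y] has_ap2[of y S x] \<open>x \<in> S\<close> \<open>y \<in> S\<close> assms(2) by blast
    qed
  qed
  then show ?thesis using card_le_Suc0_iff_eq[OF assms(1)] by simp
qed

theorem corollary1:
  fixes t :: "nat list" and m :: nat and s :: real
  assumes "param_tuple t" and "length t \<ge> 1" and "s > 1"
  shows "ereal_of_enat (vdW (replicate m 2 @ t))
           \<le> max (ereal (s * real m + 1)) (ereal_of_enat (cr_ap t (1 - 1 / s)))"
proof (cases "cr_ap t (1 - 1 / s) = \<infinity>")
  case True
  then show ?thesis by simp
next
  case False
  define q where "q = 1 - 1 / s"
  define C where "C = {n. n \<ge> 1 \<and> (\<forall>n'\<ge>n. \<forall>S :: nat \<Rightarrow> nat set.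
      ((\<forall>i<length t. S i \<subseteq> {1..n'} \<and> \<not> has_ap (t ! i) (S i)) \<and>
       (\<forall>i<length t. \<forall>j<length t. i \<noteq> j \<longrightarrow> S i \<inter> S j = {}))
      \<longrightarrow> real (\<Sum>i<length t. card (S i)) / real n' < q)}"
  have crC: "cr_ap t (1 - 1/s) = Inf (enat ` C)" unfolding cr_ap_def C_def q_def by simp
  have ne: "enat ` C \<noteq> {}" using False crC by (auto simp: Inf_enat_def)
  then have "Inf (enat ` C) \<in> enat ` C" unfolding Inf_enat_def
  proof -
    from ne obtain x where "x \<in> enat ` C" by blast
    then show "(if enat ` C = {} then \<infinity> else LEAST x. x \<in> enat ` C) \<in> enat ` C"
      using LeastI[of "\<lambda>y. y \<in> enat ` C" x] by auto
  qed
  then obtain c0 where c0C: "c0 \<in> C" and c0eq: "cr_ap t (1 - 1/s) = enat c0" using crC by auto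
  define N where "N = max (nat \<lfloor>s * real m\<rfloor> + 1) c0"
  let ?ks = "replicate m 2 @ t"
  have NW: "\<forall>n\<ge>N. \<forall>f :: nat \<Rightarrow> nat. f ` {1..n} \<subseteq> {1..length ?ks} \<longrightarrow>
      (\<exists>i\<in>{1..length ?ks}. has_ap (?ks ! (i - 1)) ({x\<in>{1..n}. f x = i}))"
  proof (intro allI impI)
    fix n f assume nN: "n \<ge> N" and fr: "f ` {1..n} \<subseteq> {1..length ?ks}"
    show "\<exists>i\<in>{1..length ?ks}. has_ap (?ks ! (i - 1)) ({x\<in>{1..n}. f x = i})"
    proof (rule ccontr)
      assume H: "\<not> ?thesis"
      define A where "A i = {x\<in>{1..n}. f x = i}" for i
      have Afin: "finite (A i)" for i unfolding A_def by simp
      have part: "{1..n} = (\<Union>i\<in>{1..length ?ks}. A i)" using fr unfolding A_def by auto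
      have "card {1..n} = (\<Sum>i\<in>{1..length ?ks}. card (A i))"
        unfolding part by (subst card_UN_disjoint) (auto simp: Afin A_def)
      also have "{1..length ?ks} = {1..m} \<union> {m+1..m + length t}" by auto
      also have "(\<Sum>i\<in>{1..m} \<union> {m+1..m + length t}. card (A i)) =
          (\<Sum>i\<in>{1..m}. card (A i)) + (\<Sum>i\<in>{m+1..m + length t}. card (A i))"
        by (rule sum.union_disjoint) auto
      finally have nsum: "n = (\<Sum>i\<in>{1..m}. card (A i)) + (\<Sum>i\<in>{m+1..m + length t}. card (A i))"
        by simp
      have "(\<Sum>i\<in>{1..m}. card (A i)) \<le> (\<Sum>i\<in>{1..m}. 1)"
      proof (rule sum_mono)
        fix i assume i: "i \<in> {1..m}"
        then have e: "?ks ! (i - 1) = 2" by (auto simp: nth_append)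
        have "i \<in> {1..length ?ks}" using i by simp
        then have "\<not> has_ap (?ks ! (i - 1)) (A i)" using H unfolding A_def by blast
        then have "\<not> has_ap 2 (A i)" using e by simp
        then show "card (A i) \<le> 1" using no_ap2_card Afin by blast
      qed
      then have s1: "(\<Sum>i\<in>{1..m}. card (A i)) \<le> m" by simp
      have s2eq: "(\<Sum>i\<in>{m+1..m + length t}. card (A i)) = (\<Sum>i<length t. card (A (m + 1 + i)))"
      proof -
        have "{m+1..m + length t} = (\<lambda>i. m + 1 + i) ` {..<length t}" 
        proof
          show "(\<lambda>i. m + 1 + i) ` {..<length t} \<subseteq> {m+1..m + length t}" by auto
          show "{m+1..m + length t} \<subseteq> (\<lambda>i. m + 1 + i) ` {..<length t}"
          proof
            fix x assume x: "x \<in> {m+1..m + length t}"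
            then have "x = m + 1 + (x - (m+1))" "x - (m+1) \<in> {..<length t}" by auto
            then show "x \<in> (\<lambda>i. m + 1 + i) ` {..<length t}" by (rule image_eqI)
          qed
        qed
        moreover have "inj_on (\<lambda>i. m + 1 + i) {..<length t}" by (simp add: inj_on_def)
        ultimately show ?thesis by (simp add: sum.reindex)
      qed
      have n1: "n \<ge> c0" using nN N_def by auto
      have c01: "\<forall>S :: nat \<Rightarrow> nat set.
      ((\<forall>i<length t. S i \<subseteq> {1..n} \<and> \<not> has_ap (t ! i) (S i)) \<and>
       (\<forall>i<length t. \<forall>j<length t. i \<noteq> j \<longrightarrow> S i \<inter> S j = {}))
      \<longrightarrow> real (\<Sum>i<length t. card (S i)) / real n < q"
      proof -
        have c0all: "\<forall>n'\<ge>c0. \<forall>S :: nat \<Rightarrow> nat set.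
          ((\<forall>i<length t. S i \<subseteq> {1..n'} \<and> \<not> has_ap (t ! i) (S i)) \<and>
           (\<forall>i<length t. \<forall>j<length t. i \<noteq> j \<longrightarrow> S i \<inter> S j = {}))
          \<longrightarrow> real (\<Sum>i<length t. card (S i)) / real n' < q"
          using c0C unfolding C_def mem_Collect_eq by (rule conjunct2)
        show ?thesis by (rule mp[OF spec[OF c0all, of n] n1])
      qed
      have cond: "(\<forall>i<length t. A (m + 1 + i) \<subseteq> {1..n} \<and> \<not> has_ap (t ! i) (A (m + 1 + i))) \<and>
       (\<forall>i<length t. \<forall>j<length t. i \<noteq> j \<longrightarrow> A (m + 1 + i) \<inter> A (m + 1 + j) = {})"
      proof (intro conjI allI impI)
        fix i assume i: "i < length t"
        show "A (m + 1 + i) \<subseteq> {1..n}" unfolding A_def by auto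
        have e: "?ks ! (m + 1 + i - 1) = t ! i" by (simp add: nth_append)
        have "m + 1 + i \<in> {1..length ?ks}" using i by simp
        then have "\<not> has_ap (?ks ! (m + 1 + i - 1)) (A (m + 1 + i))" using H unfolding A_def by blast
        then show "\<not> has_ap (t ! i) (A (m + 1 + i))" using e by simp
      next
        fix i j :: nat assume "i \<noteq> j" then show "A (m + 1 + i) \<inter> A (m + 1 + j) = {}"
          unfolding A_def by auto
      qed
      have npos: "n \<ge> 1" using nN N_def by auto
      have lt: "real (\<Sum>i<length t. card (A (m + 1 + i))) / real n < q"
        by (rule mp[OF spec[OF c01, of "\<lambda>i. A (m + 1 + i)"] cond])
      then have lt2: "real (\<Sum>i<length t. card (A (m + 1 + i))) < q * real n"
        using npos by (simp add: divide_less_eq)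
      have "real n \<le> real m + real (\<Sum>i<length t. card (A (m + 1 + i)))"
        using nsum s1 s2eq by linarith
      then have "real n < real m + q * real n" using lt2 by linarith
      moreover have "q * real n = real n - real n / s" unfolding q_def
        by (simp add: left_diff_distrib)
      ultimately have "real n / s < real m" by linarith
      then have "real n < s * real m" using assms(3) by (simp add: divide_less_eq mult.commute)
      moreover have "real n \<ge> real (nat \<lfloor>s * real m\<rfloor> + 1)" using nN N_def by auto
      moreover have "real (nat \<lfloor>s * real m\<rfloor> + 1) > s * real m"
      proof -
        have "s * real m \<ge> 0" using assms(3) by simp
        then show ?thesis by linarith
      qed
      ultimately show False by linarith
    qed
  qed
  have "vdW ?ks \<le> enat N" unfolding vdW_def
    by (rule Inf_lower, rule imageI, simp only: mem_Collect_eq, rule NW)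
  then have "ereal_of_enat (vdW ?ks) \<le> ereal_of_enat (enat N)"
    by (simp only: ereal_of_enat_le_iff)
  then have "ereal_of_enat (vdW ?ks) \<le> ereal (real N)"
    by (simp only: ereal_of_enat_simps(1))
  also have "ereal (real N) \<le> max (ereal (s * real m + 1)) (ereal (real c0))"
  proof -
    have "real (nat \<lfloor>s * real m\<rfloor> + 1) \<le> s * real m + 1"
    proof -
      have "s * real m \<ge> 0" using assms(3) by simp
      then show ?thesis by linarith
    qed
    then show ?thesis unfolding N_def by (auto simp: max_def)
  qed
  finally show ?thesis using c0eq by simp
qed

end
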